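(* Let $0<\alpha<n$ and let $q(\cdot):\mathbb{R}^n\to(0,\infty)$ be measurable with $0<q_-\le q_+<\infty$. If $\omega\in\mathcal{W}_{q(\cdot)}$ and $\frac{1}{p(\cdot)}:=\frac{1}{q(\cdot)}+\frac{\alpha}{n}$, then $\omega\in\mathcal{W}_{p(\cdot)}$. Moreover, $s_{\omega,\,p(\cdot)}\le s_{\omega,\,q(\cdot)}+\frac{\alpha}{n}$.
   Context: For a measurable $p(\cdot):\mathbb{R}^n\to(0,\infty)$, $p_-=\operatorname{ess\,inf} p$, $p_+=\operatorname{ess\,sup} p$. A weight is a locally integrable $\omega$ with $0<\omega<\infty$ a.e. $\|f\|_{L^{p(\cdot)}_\omega}:=\|f\omega\|_{L^{p(\cdot)}}$, where $\|g\|_{L^{p(\cdot)}}=\inf\{\lambda>0:\int|g(x)/\lambda|^{p(x)}dx\le1\}$; $t'(\cdot)$ denotes the conjugate exponent of $t(\cdot)\ge1$; $M$ is the Hardy–Littlewood maximal operator. For $0<p_-\le p_+<\infty$, $\mathcal{W}_{p(\cdot)}$ is the set of weights $\omega$ such that: (i) there exists $0<p_\ast<\min\{1,p_-\}$ with $\|\chi_Q\|_{L^{p(\cdot)/p_\ast}_{\omega^{p_\ast}}}<\infty$ and $\|\chi_Q\|_{L^{(p(\cdot)/p_\ast)'}_{\omega^{-p_\ast}}}<\infty$ for all cubes $Q$; (ii) there exist $\kappa>1$ and $s>1$ such that $M$ is bounded on $L^{(sp(\cdot))'/\kappa}_{\omega^{-\kappa/s}}$. $s_{\omega,\,p(\cdot)}:=\inf\{s\ge1: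 M\text{ is bounded on }L^{(sp(\cdot))'}_{\omega^{-1/s}}\}$. *)

theory Defs
  imports "HOL-Analysis.Analysis"
begin

definition ess_inf :: "('a::euclidean_space \<Rightarrow> real) \<Rightarrow> ereal" where
  "ess_inf p = Sup {c::ereal. AE x in lebesgue. c \<le> ereal (p x)}"

definition ess_sup :: "('a::euclidean_space \<Rightarrow> real) \<Rightarrow> ereal" where
  "ess_sup p = Inf {c::ereal. AE x in lebesgue. ereal (p x) \<le> c}"

text \<open>Conjugate exponent t' = t/(t-1), with 1' = infinity (only used where t >= 1 a.e.).\<close>
definition conj_exp :: "real \<Rightarrow> ereal" where
  "conj_exp t = (if t \<le> 1 then \<infinity> else ereal (t / (t - 1)))"

definition phi_exp :: "ereal \<Rightarrow> ennreal \<Rightarrow> ennreal" where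
  "phi_exp r t = (if r = \<infinity> then (if t \<le> 1 then 0 else \<infinity>)
                  else if t = \<infinity> then \<infinity>
                  else ennreal (enn2real t powr real_of_ereal r))"

definition modular :: "('a::euclidean_space \<Rightarrow> ereal) \<Rightarrow> ('a \<Rightarrow> ennreal) \<Rightarrow> ennreal" where
  "modular r g = (\<integral>\<^sup>+ x. phi_exp (r x) (g x) \<partial>lebesgue)"

definition var_norm :: "('a::euclidean_space \<Rightarrow> ereal) \<Rightarrow> ('a \<Rightarrow> ennreal) \<Rightarrow> ennreal" where
  "var_norm r g = Inf {ennreal l | l. l > 0 \<and> modular r (\<lambda>x. g x / ennreal l) \<le> 1}"

definition wvar_norm :: "('a::euclidean_space \<Rightarrow> ereal) \<Rightarrow> ('a \<Rightarrow> real) \<Rightarrow> ('a \<Rightarrow> ennreal) \<Rightarrow> ennreal" where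
  "wvar_norm r w f = var_norm r (\<lambda>x. f x * ennreal (w x))"

definition is_cube :: "'a::euclidean_space set \<Rightarrow> bool" where
  "is_cube Q \<longleftrightarrow> (\<exists>a l. l > 0 \<and> Q = cbox a (a + l *\<^sub>R One))"

definition maxop :: "('a::euclidean_space \<Rightarrow> real) \<Rightarrow> 'a \<Rightarrow> ennreal" where
  "maxop f x = (SUP Q \<in> {Q. is_cube Q \<and> x \<in> Q}.
      (\<integral>\<^sup>+ y \<in> Q. ennreal \<bar>f y\<bar> \<partial>lebesgue) / emeasure lebesgue Q)"

definition M_bounded :: "('a::euclidean_space \<Rightarrow> ereal) \<Rightarrow> ('a \<Rightarrow> real) \<Rightarrow> bool" where
  "M_bounded r w \<longleftrightarrow> (\<exists>C::real. C \<ge> 0 \<and>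
     (\<forall>f \<in> borel_measurable lebesgue. wvar_norm r w (\<lambda>x. ennreal \<bar>f x\<bar>) < \<infinity> \<longrightarrow>
        wvar_norm r w (maxop f) \<le> ennreal C * wvar_norm r w (\<lambda>x. ennreal \<bar>f x\<bar>)))"

definition is_weight :: "('a::euclidean_space \<Rightarrow> real) \<Rightarrow> bool" where
  "is_weight w \<longleftrightarrow> w \<in> borel_measurable lebesgue \<and> (AE x in lebesgue. 0 < w x) \<and>
     (\<forall>K. compact K \<longrightarrow> set_integrable lebesgue K w)"

definition admissible_exp :: "('a::euclidean_space \<Rightarrow> real) \<Rightarrow> bool" where
  "admissible_exp p \<longleftrightarrow> p \<in> borel_measurable lebesgue \<and> (\<forall>x. 0 < p x) \<and>
     0 < ess_inf p \<and> ess_sup p < \<infinity>"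

definition W_class :: "('a::euclidean_space \<Rightarrow> real) \<Rightarrow> ('a \<Rightarrow> real) set" where
  "W_class p = {w. admissible_exp p \<and> is_weight w \<and>
     (\<exists>ps::real. 0 < ps \<and> ereal ps < min 1 (ess_inf p) \<and>
        (\<forall>Q. is_cube Q \<longrightarrow>
           wvar_norm (\<lambda>x. ereal (p x / ps)) (\<lambda>x. w x powr ps) (indicator Q) < \<infinity> \<and>
           wvar_norm (\<lambda>x. conj_exp (p x / ps)) (\<lambda>x. w x powr (- ps)) (indicator Q) < \<infinity>)) \<and>
     (\<exists>\<kappa>::real. \<kappa> > 1 \<and> (\<exists>s::real. s > 1 \<and> (AE x in lebesgue. 1 \<le> s * p x) \<and>
        M_bounded (\<lambda>x. conj_exp (s * p x) / ereal \<kappa>) (\<lambda>x. w x powr (- \<kappa> / s))))}"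

text \<open>The index s_{w,p(.)} (Inf of the empty set is infinity).\<close>
definition s_index :: "('a::euclidean_space \<Rightarrow> real) \<Rightarrow> ('a \<Rightarrow> real) \<Rightarrow> ereal" where
  "s_index w p = Inf {ereal s | s. s \<ge> 1 \<and> (AE x in lebesgue. 1 \<le> s * p x) \<and>
      M_bounded (\<lambda>x. conj_exp (s * p x)) (\<lambda>x. w x powr (- 1 / s))}"

end

theory Submission
  imports Defs
begin

lemma tangent_powr:
  fixes y m t :: real assumes "t \<ge> 1" "m > 0" "y \<ge> 0"
  shows "m powr t + t * m powr (t - 1) * y \<le> y powr t + t * m powr (t-1) * m"
proof (cases "y = 0")
  case True
  have e: "m powr t = m powr (t-1) * m" using assms by (simp add: powr_diff)
  have "m powr (t-1) * m \<le> t * (m powr (t-1) * m)"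
    using assms by (intro mult_right_mono[of 1 t, simplified]) auto
  then show ?thesis using True assms e by (simp add: mult.assoc)
next
  case False
  then have y: "y > 0" using assms by simp
  have "t * m powr (t - 1) * (y - m) \<le> y powr t - m powr t"
    using assms y
    by (intro convex_on_imp_above_tangent[where A = "{0<..}"] powr_convex)
       (auto intro!: derivative_eq_intros simp: interior_open)
  then show ?thesis by (simp add: algebra_simps)
qed

definition epow :: "ennreal \<Rightarrow> real \<Rightarrow> ennreal" where
  "epow a t = (if a = top then top else ennreal (enn2real a powr t))"

lemma epow_ennreal: "y \<ge> 0 \<Longrightarrow> epow (ennreal y) t = ennreal (y powr t)"
  by (simp add: epow_def)

lemma epow_top[simp]: "epow top t = top" by (simp add: epow_def)

lemma epow_mono: assumes "a \<le> b" "t \<ge> 0" shows "epow a t \<le> epow b t"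
proof (cases "b = top")
  case True then show ?thesis by (simp add: epow_def)
next
  case False
  then have "a \<noteq> top" using assms top_unique by fastforce
  then show ?thesis using False assms
    by (auto simp: epow_def less_top[symmetric] intro!: ennreal_leI powr_mono2 enn2real_mono)
qed

lemma epow_epow: assumes "t > 0" shows "epow (epow a s) t = epow a (s * t)"
  using assms by (auto simp: epow_def powr_powr)

lemma epow_1[simp]: "epow a 1 = a"
  by (cases a) (auto simp: epow_def)

lemma epow_pos: "a > 0 \<Longrightarrow> epow a t > 0"
  by (cases a) (auto simp: epow_def)

lemma epow_0[simp]: "epow 0 t = 0" by (simp add: epow_def)

lemma epow_mult: assumes "t > 0" shows "epow (a * b) t = epow a t * epow b t"
proof (cases "a = top \<or> b = top")
  case True
  then show ?thesis
    using epow_pos[of a t] epow_pos[of b t]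
    by (cases "a = 0"; cases "b = 0") (auto simp: ennreal_mult_eq_top_iff ennreal_top_mult ennreal_mult_top zero_less_iff_neq_zero)
next
  case False
  then obtain x y where "a = ennreal x" "b = ennreal y" "x \<ge> 0" "y \<ge> 0"
    by (metis ennreal_cases top.not_eq_extremum)
  then show ?thesis by (simp add: epow_def powr_mult ennreal_mult' ennreal_mult_eq_top_iff enn2real_mult)
qed

lemma epow_div: assumes "t > 0" "l > 0" shows "epow (a / ennreal l) t = epow a t / ennreal (l powr t)"
proof -
  have d: "1 / ennreal l = ennreal (1/l)" using divide_ennreal[of 1 l] assms by simp
  have e1: "a / ennreal l = a * ennreal (1 / l)" by (metis ennreal_divide_times mult.right_neutral d)
  have "ennreal 1 / ennreal (l powr t) = ennreal (1/ l powr t)"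
    by (rule divide_ennreal) (use assms in auto)
  then have d2: "1 / ennreal (l powr t) = ennreal (1/ l powr t)" by (simp only: ennreal_1)
  have e2: "epow a t / ennreal (l powr t) = epow a t * ennreal (1 / l powr t)"
    by (metis ennreal_divide_times mult.right_neutral d2)
  have "epow (a / ennreal l) t = epow a t * epow (ennreal (1/l)) t" using e1 epow_mult assms by simp
  also have "epow (ennreal (1/l)) t = ennreal (1 / l powr t)" using assms
    by (simp add: epow_ennreal powr_divide)
  finally show ?thesis using e2 by simp
qed

lemma epow_le_1_iff: assumes "t > 0" shows "epow a t \<le> 1 \<longleftrightarrow> a \<le> 1"
proof (cases "a = top")
  case True then show ?thesis by simp
next
  case False
  then obtain x where "a = ennreal x" "x \<ge> 0" by (metis ennreal_cases)
  moreover have "(x powr t \<le> 1) = (x \<le> 1)"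
  proof (cases "x = 0")
    case False
    show ?thesis
    proof (cases "x \<le> 1")
      case True then show ?thesis using assms \<open>x \<ge> 0\<close> powr_le1[of t x] by simp
    next
      case False then show ?thesis using assms gr_one_powr[of x t] by linarith
    qed
  qed simp
  ultimately show ?thesis using assms by (simp add: epow_def)
qed

lemma phi_epow: assumes "r \<ge> 0" "t > 0"
  shows "phi_exp (r * ereal t) a = phi_exp r (epow a t)"
proof (cases r)
  case (real e)
  then show ?thesis using assms by (auto simp: phi_exp_def epow_def powr_powr mult.commute)
next
  case PInf
  then show ?thesis using assms epow_le_1_iff[OF assms(2), of a] by (auto simp: phi_exp_def)
next
  case MInf then show ?thesis using assms by simp
qed

lemma phi_mono: assumes "r \<ge> 0" "a \<le> b" shows "phi_exp r a \<le> phi_exp r b"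
proof (cases r)
  case (real e)
  then show ?thesis using assms epow_mono[OF assms(2), of e]
    by (auto simp: phi_exp_def epow_def split: if_splits)
next
  case PInf
  then show ?thesis using assms by (auto simp: phi_exp_def)
next
  case MInf then show ?thesis using assms by simp
qed

lemma cube_meas:
  assumes "is_cube Q"
  shows "Q \<in> sets lebesgue" "\<exists>\<mu>>0. emeasure lebesgue Q = ennreal \<mu>"
proof -
  obtain a l where l: "l > 0" "Q = cbox a (a + l *\<^sub>R One)" using assms is_cube_def by blast
  then show "Q \<in> sets lebesgue" by simp
  have m: "emeasure lebesgue Q = ennreal (measure lebesgue Q)"
    using l by (simp add: emeasure_eq_measure2)
  have "measure lebesgue Q = measure lborel Q" using l by simp
  also have "\<dots> = (\<Prod>i\<in>(Basis::'a set). l)" using l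
    unfolding l(2) by (subst content_cbox) (auto simp: inner_simps algebra_simps)
  also have "\<dots> > 0" using l by simp
  finally show "\<exists>\<mu>>0. emeasure lebesgue Q = ennreal \<mu>" using m by blast
qed

lemma cube_jensen:
  fixes f :: "'a::euclidean_space \<Rightarrow> real"
  assumes t: "t \<ge> 1" and Q: "is_cube Q" and f: "f \<in> borel_measurable lebesgue"
  shows "(\<integral>\<^sup>+ y \<in> Q. ennreal \<bar>f y\<bar> \<partial>lebesgue) / emeasure lebesgue Q
     \<le> epow ((\<integral>\<^sup>+ y \<in> Q. ennreal \<bar>\<bar>f y\<bar> powr t\<bar> \<partial>lebesgue) / emeasure lebesgue Q) (1/t)"
proof -
  have Qs: "Q \<in> sets lebesgue" using cube_meas[OF Q] by simp
  obtain \<mu> where mu: "\<mu> > 0" "emeasure lebesgue Q = ennreal \<mu>" using cube_meas[OF Q] by blast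
  define I1 where "I1 = (\<integral>\<^sup>+ y \<in> Q. ennreal \<bar>f y\<bar> \<partial>lebesgue)"
  define It where "It = (\<integral>\<^sup>+ y \<in> Q. ennreal (\<bar>f y\<bar> powr t) \<partial>lebesgue)"
  have It_eq: "(\<integral>\<^sup>+ y \<in> Q. ennreal \<bar>\<bar>f y\<bar> powr t\<bar> \<partial>lebesgue) = It"
    unfolding It_def by simp
  have "I1 / emeasure lebesgue Q \<le> epow (It / emeasure lebesgue Q) (1/t)"
  proof (cases "It = top")
    case True
    then have "It / emeasure lebesgue Q = top" using mu by (simp add: ennreal_divide_eq_top_iff)
    then show ?thesis by simp
  next
    case False
    have "I1 \<le> (\<integral>\<^sup>+ y. (ennreal 1 * indicator Q y + ennreal (\<bar>f y\<bar> powr t) * indicator Q y) \<partial>lebesgue)"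
      unfolding I1_def
    proof (intro nn_integral_mono)
      fix y
      have "\<bar>f y\<bar> \<le> 1 + \<bar>f y\<bar> powr t"
      proof (cases "\<bar>f y\<bar> \<le> 1")
        case False
        then have "\<bar>f y\<bar> powr 1 \<le> \<bar>f y\<bar> powr t" using t by (intro powr_mono) auto
        then show ?thesis using False by simp
      qed (use powr_ge_zero[of "\<bar>f y\<bar>" t] in linarith)
      then have "ennreal \<bar>f y\<bar> \<le> ennreal (1 + \<bar>f y\<bar> powr t)" by (rule ennreal_leI)
      also have "\<dots> = ennreal 1 + ennreal (\<bar>f y\<bar> powr t)" by (rule ennreal_plus) auto
      finally have "ennreal \<bar>f y\<bar> \<le> ennreal 1 + ennreal (\<bar>f y\<bar> powr t)" .
      then show "ennreal \<bar>f y\<bar> * indicator Q y \<le> ennreal 1 * indicator Q y + ennreal (\<bar>f y\<bar> powr t) * indicator Q y"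
        by (cases "y \<in> Q") auto
    qed
    also have "\<dots> = emeasure lebesgue Q + It"
      using Qs f unfolding It_def by (subst nn_integral_add) auto
    finally have "I1 \<le> ennreal \<mu> + It" using mu by simp
    moreover have "ennreal \<mu> + It < top" using False by (simp add: less_top[symmetric])
    ultimately have I1fin: "I1 < top" by (rule le_less_trans)
    then obtain J where J: "I1 = ennreal J" "J \<ge> 0" by (metis ennreal_cases less_irrefl)
    define m where "m = J / \<mu>"
    have m0: "m \<ge> 0" using J mu by (simp add: m_def)
    have avg: "I1 / emeasure lebesgue Q = ennreal m"
      using J mu by (simp add: m_def divide_ennreal)
    show "I1 / emeasure lebesgue Q \<le> epow (It / emeasure lebesgue Q) (1 / t)"
    proof (cases "m = 0")
      case True then have "I1 / emeasure lebesgue Q = 0" using avg by simp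
      then show ?thesis by (simp only: zero_le)
    next
      case False
      then have mpos: "m > 0" using m0 by simp
      define c where "c = t * m powr (t - 1)"
      have c0: "c \<ge> 0" using t by (simp add: c_def)
      have "(\<integral>\<^sup>+ y. (ennreal (m powr t) * indicator Q y + ennreal c * (ennreal \<bar>f y\<bar> * indicator Q y)) \<partial>lebesgue)
          \<le> (\<integral>\<^sup>+ y. (ennreal (\<bar>f y\<bar> powr t) * indicator Q y + ennreal (c * m) * indicator Q y) \<partial>lebesgue)"
      proof (intro nn_integral_mono)
        fix y
        have "m powr t + c * \<bar>f y\<bar> \<le> \<bar>f y\<bar> powr t + c * m"
          using tangent_powr[OF t mpos, of "\<bar>f y\<bar>"] by (simp add: c_def)
        then have "ennreal (m powr t + c * \<bar>f y\<bar>) \<le> ennreal (\<bar>f y\<bar> powr t + c * m)" by (rule ennreal_leI)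
        moreover have "ennreal (m powr t + c * \<bar>f y\<bar>) = ennreal (m powr t) + ennreal c * ennreal \<bar>f y\<bar>"
          using c0 by (simp add: ennreal_plus ennreal_mult)
        moreover have "ennreal (\<bar>f y\<bar> powr t + c * m) = ennreal (\<bar>f y\<bar> powr t) + ennreal (c * m)"
          using c0 m0 by (simp add: ennreal_plus)
        ultimately have "ennreal (m powr t) + ennreal c * ennreal \<bar>f y\<bar> \<le> ennreal (\<bar>f y\<bar> powr t) + ennreal (c * m)"
          by simp
        then show "ennreal (m powr t) * indicator Q y + ennreal c * (ennreal \<bar>f y\<bar> * indicator Q y)
           \<le> ennreal (\<bar>f y\<bar> powr t) * indicator Q y + ennreal (c * m) * indicator Q y"
          by (cases "y \<in> Q") auto
      qed
      also have "\<dots> = It + ennreal (c * m) * emeasure lebesgue Q"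
      proof -
        have "(\<integral>\<^sup>+ y. (ennreal (\<bar>f y\<bar> powr t) * indicator Q y + ennreal (c * m) * indicator Q y) \<partial>lebesgue)
          = (\<integral>\<^sup>+ y. ennreal (\<bar>f y\<bar> powr t) * indicator Q y \<partial>lebesgue) + (\<integral>\<^sup>+ y. ennreal (c * m) * indicator Q y \<partial>lebesgue)"
          by (rule nn_integral_add) (use Qs f in auto)+
        also have "(\<integral>\<^sup>+ y. ennreal (c * m) * indicator Q y \<partial>lebesgue) = ennreal (c * m) * emeasure lebesgue Q"
          using Qs by (simp add: nn_integral_cmult_indicator)
        finally show ?thesis unfolding It_def by simp
      qed
      also have "(\<integral>\<^sup>+ y. (ennreal (m powr t) * indicator Q y + ennreal c * (ennreal \<bar>f y\<bar> * indicator Q y)) \<partial>lebesgue)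
          = ennreal (m powr t) * emeasure lebesgue Q + ennreal c * I1"
      proof -
        have "(\<integral>\<^sup>+ y. (ennreal (m powr t) * indicator Q y + ennreal c * (ennreal \<bar>f y\<bar> * indicator Q y)) \<partial>lebesgue)
          = (\<integral>\<^sup>+ y. ennreal (m powr t) * indicator Q y \<partial>lebesgue) + (\<integral>\<^sup>+ y. ennreal c * (ennreal \<bar>f y\<bar> * indicator Q y) \<partial>lebesgue)"
          by (rule nn_integral_add) (use Qs f in auto)+
        also have "(\<integral>\<^sup>+ y. ennreal (m powr t) * indicator Q y \<partial>lebesgue) = ennreal (m powr t) * emeasure lebesgue Q"
          using Qs by (simp add: nn_integral_cmult_indicator)
        also have "(\<integral>\<^sup>+ y. ennreal c * (ennreal \<bar>f y\<bar> * indicator Q y) \<partial>lebesgue) = ennreal c * I1"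
          unfolding I1_def by (rule nn_integral_cmult) (use Qs f in auto)
        finally show ?thesis .
      qed
      finally have ineq: "ennreal (m powr t) * emeasure lebesgue Q + ennreal c * I1 \<le> It + ennreal (c * m) * emeasure lebesgue Q" .
      have J2: "J = m * \<mu>" using mu by (simp add: m_def)
      have e1: "ennreal (m powr t) * emeasure lebesgue Q = ennreal (m powr t * \<mu>)"
        using mu by (simp add: ennreal_mult)
      have e2: "ennreal c * I1 = ennreal (c * m * \<mu>)"
        using mu m0 c0 J J2 by (simp add: ennreal_mult mult.assoc)
      have e3: "ennreal (c * m) * emeasure lebesgue Q = ennreal (c * m * \<mu>)"
        using mu m0 c0 by (simp add: ennreal_mult)
      have "ennreal (c * m * \<mu>) + ennreal (m powr t * \<mu>) \<le> ennreal (c * m * \<mu>) + It"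
        using ineq unfolding e1 e2 e3 by (simp only: add.commute)
      then have "ennreal (m powr t * \<mu>) \<le> It"
        using ennreal_add_left_cancel_le by simp
      then have "ennreal (m powr t * \<mu>) / ennreal \<mu> \<le> It / emeasure lebesgue Q"
        using mu by (simp add: divide_right_mono_ennreal)
      then have "ennreal (m powr t) \<le> It / emeasure lebesgue Q"
        using mu m0 by (simp add: divide_ennreal)
      then have "epow (ennreal (m powr t)) (1/t) \<le> epow (It / emeasure lebesgue Q) (1/t)"
        using t by (intro epow_mono) auto
      moreover have "epow (ennreal (m powr t)) (1/t) = ennreal m"
        using t m0 by (simp add: epow_ennreal powr_powr)
      ultimately show ?thesis using avg by simp
    qed
  qed
  then show ?thesis unfolding It_eq I1_def .
qed

lemma maxop_jensen:
  fixes f :: "'a::euclidean_space \<Rightarrow> real"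
  assumes t: "t \<ge> 1" and f: "f \<in> borel_measurable lebesgue"
  shows "epow (maxop f x) t \<le> maxop (\<lambda>y. \<bar>f y\<bar> powr t) x"
proof -
  have "maxop f x \<le> epow (maxop (\<lambda>y. \<bar>f y\<bar> powr t) x) (1/t)"
    unfolding maxop_def[of f]
  proof (rule SUP_least)
    fix Q assume Q: "Q \<in> {Q. is_cube Q \<and> x \<in> Q}"
    have "(\<integral>\<^sup>+ y \<in> Q. ennreal \<bar>f y\<bar> \<partial>lebesgue) / emeasure lebesgue Q
     \<le> epow ((\<integral>\<^sup>+ y \<in> Q. ennreal \<bar>\<bar>f y\<bar> powr t\<bar> \<partial>lebesgue) / emeasure lebesgue Q) (1/t)"
      using cube_jensen[OF t _ f] Q by blast
    also have "\<dots> \<le> epow (maxop (\<lambda>y. \<bar>f y\<bar> powr t) x) (1/t)"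
      unfolding maxop_def using Q t by (intro epow_mono SUP_upper) auto
    finally show "(\<integral>\<^sup>+ y \<in> Q. ennreal \<bar>f y\<bar> \<partial>lebesgue) / emeasure lebesgue Q
      \<le> epow (maxop (\<lambda>y. \<bar>f y\<bar> powr t) x) (1/t)" .
  qed
  then have "epow (maxop f x) t \<le> epow (epow (maxop (\<lambda>y. \<bar>f y\<bar> powr t) x) (1/t)) t"
    using t by (intro epow_mono) auto
  also have "\<dots> = maxop (\<lambda>y. \<bar>f y\<bar> powr t) x" using t by (simp add: epow_epow)
  finally show ?thesis .
qed

lemma div_ennreal_eq: "l > 0 \<Longrightarrow> g / ennreal l = g * ennreal (1 / l)"
proof -
  assume l: "l > 0"
  have "ennreal 1 / ennreal l = ennreal (1/ l)" by (rule divide_ennreal) (use l in auto)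
  then have d: "1 / ennreal l = ennreal (1/ l)" by (simp only: ennreal_1)
  show ?thesis by (metis ennreal_divide_times mult.right_neutral d)
qed

lemma modular_pow:
  assumes r0: "\<forall>x. r x \<ge> 0" and t: "t > 0" and l: "l > 0"
  shows "modular (\<lambda>x. r x * ereal t) (\<lambda>x. g x / ennreal l)
       = modular r (\<lambda>x. epow (g x) t / ennreal (l powr t))"
  unfolding modular_def using r0 t l by (simp add: phi_epow epow_div)

lemma modular_mono:
  assumes r0: "\<forall>x. r x \<ge> 0" and gh: "\<And>x. g x \<le> h x"
  shows "modular r (\<lambda>x. g x / c) \<le> modular r (\<lambda>x. h x / c)"
  unfolding modular_def using r0 gh
  by (intro nn_integral_mono phi_mono divide_right_mono_ennreal) auto

lemma modular_antimono:
  assumes r0: "\<forall>x. r x \<ge> 0" and l: "0 < l1" "l1 \<le> l2"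
  shows "modular r (\<lambda>x. g x / ennreal l2) \<le> modular r (\<lambda>x. g x / ennreal l1)"
proof -
  have "g x / ennreal l2 \<le> g x / ennreal l1" for x
    using l by (simp add: div_ennreal_eq mult_left_mono ennreal_leI frac_le)
  then show ?thesis unfolding modular_def using r0
    by (intro nn_integral_mono phi_mono) auto
qed

lemma le_mult_Inf:
  fixes a c :: ennreal
  assumes c: "c > 0" "c < top" and H: "\<And>x. x \<in> S \<Longrightarrow> a \<le> c * x"
  shows "a \<le> c * Inf S"
proof -
  have "a / c \<le> Inf S"
  proof (rule Inf_greatest)
    fix x assume "x \<in> S"
    then have "a / c \<le> (c * x) / c" using H by (intro divide_right_mono_ennreal) auto
    also have "\<dots> = (x * c) / c" by (simp only: mult.commute)
    also have "\<dots> = x" by (rule ennreal_mult_divide_eq) (use c in auto)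
    finally show "a / c \<le> x" .
  qed
  then have "(a / c) * c \<le> Inf S * c" by (rule mult_right_mono) simp
  moreover have "(a / c) * c = a" using c by (simp add: ennreal_divide_times)
  ultimately show ?thesis by (simp add: mult.commute)
qed

lemma M_bounded_pow:
  fixes r :: "'a::euclidean_space \<Rightarrow> ereal" and v v' :: "'a \<Rightarrow> real"
  assumes t: "t \<ge> 1" and Mb: "M_bounded r v" and r0: "\<forall>x. r x \<ge> 0"
    and vv: "\<And>x. v x = v' x powr t" and v0: "\<And>x. v' x \<ge> 0"
  shows "M_bounded (\<lambda>x. r x * ereal t) v'"
proof -
  obtain C where C0: "C \<ge> 0" and H: "\<And>f. f \<in> borel_measurable lebesgue \<Longrightarrow>
      wvar_norm r v (\<lambda>x. ennreal \<bar>f x\<bar>) < \<infinity> \<Longrightarrow>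
      wvar_norm r v (maxop f) \<le> ennreal C * wvar_norm r v (\<lambda>x. ennreal \<bar>f x\<bar>)"
    using Mb unfolding M_bounded_def by blast
  define C' where "C' = (C + 1) powr (1 / t)"
  have C'pos: "C' > 0" using C0 by (simp add: C'_def)
  let ?r' = "\<lambda>x. r x * ereal t"
  have t0: "t > 0" using t by simp
  have ev: "epow (ennreal (v' x)) t = ennreal (v x)" for x using v0 vv by (simp add: epow_ennreal)
  show ?thesis
    unfolding M_bounded_def
  proof (intro exI[of _ C'] conjI ballI impI)
    show "C' \<ge> 0" using C'pos by simp
    fix f :: "'a \<Rightarrow> real"
    assume f: "f \<in> borel_measurable lebesgue"
    define F where "F = (\<lambda>y. \<bar>f y\<bar> powr t)"
    have Fm: "F \<in> borel_measurable lebesgue" unfolding F_def using f by auto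
    have absF: "\<bar>F y\<bar> = F y" for y by (simp add: F_def)
    have claim: "var_norm ?r' (\<lambda>x. maxop f x * ennreal (v' x)) \<le> ennreal C' * ennreal l"
      if l: "l > 0" and ml: "modular ?r' (\<lambda>x. ennreal \<bar>f x\<bar> * ennreal (v' x) / ennreal l) \<le> 1" for l
    proof -
      have "modular ?r' (\<lambda>x. ennreal \<bar>f x\<bar> * ennreal (v' x) / ennreal l)
          = modular r (\<lambda>x. epow (ennreal \<bar>f x\<bar> * ennreal (v' x)) t / ennreal (l powr t))"
        by (rule modular_pow[OF r0 t0 l])
      also have "(\<lambda>x. epow (ennreal \<bar>f x\<bar> * ennreal (v' x)) t) = (\<lambda>x. ennreal \<bar>F x\<bar> * ennreal (v x))"
        using t0 ev by (simp add: epow_mult epow_ennreal absF F_def)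
      finally have m1: "modular r (\<lambda>x. ennreal \<bar>F x\<bar> * ennreal (v x) / ennreal (l powr t)) \<le> 1"
        using ml by simp
      have nF: "wvar_norm r v (\<lambda>x. ennreal \<bar>F x\<bar>) \<le> ennreal (l powr t)"
        unfolding wvar_norm_def var_norm_def
        by (rule Inf_lower) (use l m1 in auto)
      then have "wvar_norm r v (\<lambda>x. ennreal \<bar>F x\<bar>) < \<infinity>"
        using le_less_trans by fastforce
      then have "wvar_norm r v (maxop F) \<le> ennreal C * wvar_norm r v (\<lambda>x. ennreal \<bar>F x\<bar>)"
        using H[OF Fm] by blast
      also have "\<dots> \<le> ennreal C * ennreal (l powr t)" by (rule mult_left_mono[OF nF]) simp
      also have "\<dots> = ennreal (C * l powr t)" using C0 by (simp add: ennreal_mult)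
      also have "\<dots> < ennreal ((C + 1) * l powr t)" using C0 l by (simp add: ennreal_less_iff)
      finally have lt: "var_norm r (\<lambda>x. maxop F x * ennreal (v x)) < ennreal ((C + 1) * l powr t)"
        unfolding wvar_norm_def .
      define \<mu> where "\<mu> = (C + 1) * l powr t"
      have mu0: "\<mu> > 0" using C0 l by (simp add: \<mu>_def)
      obtain l2 where l2: "l2 > 0" "modular r (\<lambda>x. maxop F x * ennreal (v x) / ennreal l2) \<le> 1"
        "ennreal l2 < ennreal \<mu>"
        using lt unfolding var_norm_def \<mu>_def[symmetric] Inf_less_iff by blast
      have l2mu: "l2 \<le> \<mu>"
      proof (rule ccontr)
        assume "\<not> l2 \<le> \<mu>"
        then have "ennreal \<mu> \<le> ennreal l2" by (intro ennreal_leI) simp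
        with l2(3) show False by simp
      qed
      have mF: "modular r (\<lambda>x. maxop F x * ennreal (v x) / ennreal \<mu>) \<le> 1"
        by (rule order_trans[OF modular_antimono[OF r0 l2(1) l2mu] l2(2)])
      define L where "L = \<mu> powr (1 / t)"
      have L0: "L > 0" using mu0 by (simp add: L_def)
      have LL: "L powr t = \<mu>" using mu0 t0 by (simp add: L_def powr_powr)
      have "modular ?r' (\<lambda>x. maxop f x * ennreal (v' x) / ennreal L)
          = modular r (\<lambda>x. epow (maxop f x * ennreal (v' x)) t / ennreal \<mu>)"
        using modular_pow[OF r0 t0 L0] LL by simp
      also have "\<dots> = modular r (\<lambda>x. epow (maxop f x) t * ennreal (v x) / ennreal \<mu>)"
        using t0 ev by (simp add: epow_mult)
      also have "\<dots> \<le> modular r (\<lambda>x. maxop F x * ennreal (v x) / ennreal \<mu>)"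
        using r0 maxop_jensen[OF t f] unfolding F_def
        by (intro modular_mono mult_right_mono) auto
      finally have "modular ?r' (\<lambda>x. maxop f x * ennreal (v' x) / ennreal L) \<le> 1" using mF by simp
      then have "var_norm ?r' (\<lambda>x. maxop f x * ennreal (v' x)) \<le> ennreal L"
        unfolding var_norm_def by (intro Inf_lower) (use L0 in auto)
      also have "L = C' * l" using C0 l t0
        by (simp add: L_def \<mu>_def C'_def powr_mult powr_powr)
      finally show ?thesis using C'pos l by (simp add: ennreal_mult)
    qed
    show "wvar_norm ?r' v' (maxop f) \<le> ennreal C' * wvar_norm ?r' v' (\<lambda>x. ennreal \<bar>f x\<bar>)"
      unfolding wvar_norm_def var_norm_def
      by (rule le_mult_Inf) (use C'pos claim[unfolded var_norm_def] in auto)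
  qed
qed

lemma ess_inf_gt:
  fixes q :: "'a::euclidean_space \<Rightarrow> real"
  assumes "ereal a < ess_inf q" shows "\<exists>d>a. AE x in lebesgue. d \<le> q x"
proof -
  obtain c where c: "AE x in lebesgue. c \<le> ereal (q x)" "ereal a < c"
    using assms unfolding ess_inf_def less_Sup_iff by blast
  define d where "d = (if c = \<infinity> then a + 1 else real_of_ereal c)"
  have "d > a \<and> ereal d \<le> c" using c(2) by (cases c) (auto simp: d_def)
  moreover have "AE x in lebesgue. d \<le> q x"
    using c(1) by (rule eventually_mono) (metis \<open>d > a \<and> ereal d \<le> c\<close> ereal_less_eq(3) order_trans)
  ultimately show ?thesis by blast
qed

lemma ess_sup_lt:
  fixes q :: "'a::euclidean_space \<Rightarrow> real"
  assumes "ess_sup q < \<infinity>" shows "\<exists>K. AE x in lebesgue. q x \<le> K"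
proof -
  obtain c where c: "AE x in lebesgue. ereal (q x) \<le> c" "c < \<infinity>"
    using assms unfolding ess_sup_def Inf_less_iff by blast
  define K where "K = (if c = -\<infinity> then 0 else real_of_ereal c)"
  have cK: "c \<le> ereal K" using c(2) by (cases c) (auto simp: K_def)
  from c(1) have "AE x in lebesgue. q x \<le> K"
    by (rule eventually_mono) (metis cK ereal_less_eq(3) order_trans)
  then show ?thesis by blast
qed

lemma ess_inf_ge:
  fixes p :: "'a::euclidean_space \<Rightarrow> real"
  assumes "AE x in lebesgue. e \<le> p x" shows "ereal e \<le> ess_inf p"
  unfolding ess_inf_def by (rule Sup_upper) (use assms in auto)

lemma ess_sup_le:
  fixes p :: "'a::euclidean_space \<Rightarrow> real"
  assumes "AE x in lebesgue. p x \<le> e" shows "ess_sup p \<le> ereal e"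
  unfolding ess_sup_def by (rule Inf_lower) (use assms in auto)

lemma phi_real: "y \<ge> 0 \<Longrightarrow> phi_exp (ereal e) (ennreal y) = ennreal (y powr e)"
  by (simp add: phi_exp_def)

lemma phi_top: "phi_exp (ereal e) top = top"
  by (simp add: phi_exp_def)

lemma nn_integral_cmult_le:
  fixes c :: real assumes c0: "c \<ge> 0"
  shows "(\<integral>\<^sup>+ x. ennreal c * f x \<partial>M) \<le> ennreal c * integral\<^sup>N M f"
proof (cases "c = 0")
  case True then show ?thesis by simp
next
  case False
  then have c: "c > 0" using c0 by simp
  show ?thesis
    unfolding nn_integral_def[of M "\<lambda>x. ennreal c * f x"]
  proof (rule SUP_least)
    fix g assume g: "g \<in> {g. simple_function M g \<and> g \<le> (\<lambda>x. ennreal c * f x)}"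
    define h where "h = (\<lambda>x. g x / ennreal c)"
    have hs: "simple_function M h" using g simple_function_compose1[of M g "\<lambda>y. y / ennreal c"]
      by (auto simp: h_def)
    have gh: "g x = ennreal c * h x" for x
    proof -
      have "ennreal c * h x = (g x * ennreal c) / ennreal c"
        by (simp add: h_def ennreal_times_divide mult.commute)
      also have "\<dots> = g x" by (rule ennreal_mult_divide_eq) (use c in auto)
      finally show ?thesis by simp
    qed
    have hf: "h \<le> f"
    proof (rule le_funI)
      fix x
      have "g x \<le> ennreal c * f x" using g by (auto simp: le_fun_def)
      then have "h x \<le> (f x * ennreal c) / ennreal c"
        unfolding h_def by (intro divide_right_mono_ennreal) (simp add: mult.commute)
      also have "\<dots> = f x" by (rule ennreal_mult_divide_eq) (use c in auto)
      finally show "h x \<le> f x" .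
    qed
    have "integral\<^sup>S M g = integral\<^sup>S M (\<lambda>x. ennreal c * h x)"
      using gh by (metis (no_types, lifting) ext)
    also have "\<dots> = ennreal c * integral\<^sup>S M h" using hs by simp
    also have "\<dots> \<le> ennreal c * integral\<^sup>N M f"
      unfolding nn_integral_def using hs hf by (intro mult_left_mono SUP_upper) auto
    finally show "integral\<^sup>S M g \<le> ennreal c * integral\<^sup>N M f" .
  qed
qed

lemma norm_fin_imp_int_fin:
  fixes r :: "'a::euclidean_space \<Rightarrow> ereal"
  assumes re: "AE x in lebesgue. r x = ereal (e x) \<and> 0 \<le> e x \<and> e x \<le> K"
    and fin: "var_norm r g < \<infinity>"
  shows "(\<integral>\<^sup>+ x. phi_exp (r x) (g x) \<partial>lebesgue) < \<infinity>"
proof -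
  have "\<exists>z\<in>{ennreal l | l. l > 0 \<and> modular r (\<lambda>x. g x / ennreal l) \<le> 1}. z < \<infinity>"
    using fin unfolding var_norm_def Inf_less_iff .
  then obtain l where l: "l > 0" "modular r (\<lambda>x. g x / ennreal l) \<le> 1" by blast
  define \<Lambda> where "\<Lambda> = max 1 l"
  have L1: "\<Lambda> \<ge> 1" by (simp add: \<Lambda>_def)
  have pw: "AE x in lebesgue. phi_exp (r x) (g x) \<le> ennreal (\<Lambda> powr K) * phi_exp (r x) (g x / ennreal l)"
    using re
  proof eventually_elim
    fix x assume x: "r x = ereal (e x) \<and> 0 \<le> e x \<and> e x \<le> K"
    show "phi_exp (r x) (g x) \<le> ennreal (\<Lambda> powr K) * phi_exp (r x) (g x / ennreal l)"
    proof (cases "g x = top")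
      case True
      then have "g x / ennreal l = top" using l by (simp add: ennreal_divide_eq_top_iff)
      moreover have "ennreal (\<Lambda> powr K) > 0" using L1 by simp
      ultimately show ?thesis using True x by (simp add: phi_top ennreal_mult_top)
    next
      case False
      then obtain y where y: "g x = ennreal y" "y \<ge> 0" by (metis ennreal_cases)
      have gl: "g x / ennreal l = ennreal (y / l)" using y l by (simp add: divide_ennreal)
      have "y powr e x = (y / l) powr e x * l powr e x" using l y by (simp add: powr_divide)
      also have "\<dots> \<le> (y / l) powr e x * \<Lambda> powr K"
      proof (rule mult_left_mono)
        have "l powr e x \<le> \<Lambda> powr e x" using l x by (intro powr_mono2) (auto simp: \<Lambda>_def)
        also have "\<dots> \<le> \<Lambda> powr K" using L1 x by (intro powr_mono) auto
        finally show "l powr e x \<le> \<Lambda> powr K" .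
      qed simp
      finally have "y powr e x \<le> (y / l) powr e x * \<Lambda> powr K" .
      then have "ennreal (y powr e x) \<le> ennreal ((y / l) powr e x * \<Lambda> powr K)"
        by (rule ennreal_leI)
      also have "\<dots> = ennreal (\<Lambda> powr K) * ennreal ((y / l) powr e x)"
        using ennreal_mult[of "\<Lambda> powr K" "(y / l) powr e x"] by (simp add: mult.commute)
      finally have "ennreal (y powr e x) \<le> ennreal (\<Lambda> powr K) * ennreal ((y / l) powr e x)" .
      then show ?thesis using x y gl l by (simp add: phi_real)
    qed
  qed
  have "(\<integral>\<^sup>+ x. phi_exp (r x) (g x) \<partial>lebesgue) \<le> (\<integral>\<^sup>+ x. ennreal (\<Lambda> powr K) * phi_exp (r x) (g x / ennreal l) \<partial>lebesgue)"
    by (rule nn_integral_mono_AE[OF pw])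
  also have "\<dots> \<le> ennreal (\<Lambda> powr K) * modular r (\<lambda>x. g x / ennreal l)"
    unfolding modular_def by (rule nn_integral_cmult_le) simp
  also have "\<dots> \<le> ennreal (\<Lambda> powr K) * 1" by (rule mult_left_mono[OF l(2)]) simp
  finally show ?thesis by (simp add: le_less_trans)
qed

lemma int_fin_imp_norm_fin:
  fixes r :: "'a::euclidean_space \<Rightarrow> ereal"
  assumes re: "AE x in lebesgue. r x = ereal (e x) \<and> c \<le> e x" and c: "c > 0"
    and fin: "(\<integral>\<^sup>+ x. phi_exp (r x) (g x) \<partial>lebesgue) < \<infinity>"
  shows "var_norm r g < \<infinity>"
proof -
  obtain I0 where I0: "(\<integral>\<^sup>+ x. phi_exp (r x) (g x) \<partial>lebesgue) = ennreal I0" "I0 \<ge> 0"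
  proof -
    have "(\<integral>\<^sup>+ x. phi_exp (r x) (g x) \<partial>lebesgue) < top" using fin by simp
    then show ?thesis using that unfolding less_top_ennreal by blast
  qed
  define l where "l = max 1 (I0 powr (1 / c))"
  have l1: "l \<ge> 1" by (simp add: l_def)
  have lc: "I0 \<le> l powr c"
  proof -
    have "I0 = (I0 powr (1/c)) powr c" using c I0(2) by (cases "I0 = 0") (auto simp: powr_powr)
    also have "\<dots> \<le> l powr c" using c by (intro powr_mono2) (auto simp: l_def)
    finally show ?thesis .
  qed
  have lcpos: "l powr c > 0" using l1 by simp
  have pw: "AE x in lebesgue. phi_exp (r x) (g x / ennreal l) \<le> ennreal (1 / l powr c) * phi_exp (r x) (g x)"
    using re
  proof eventually_elim
    fix x assume x: "r x = ereal (e x) \<and> c \<le> e x"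
    show "phi_exp (r x) (g x / ennreal l) \<le> ennreal (1 / l powr c) * phi_exp (r x) (g x)"
    proof (cases "g x = top")
      case True
      then have "g x / ennreal l = top" using l1 by (simp add: ennreal_divide_eq_top_iff)
      moreover have "ennreal (1 / l powr c) > 0" using lcpos by simp
      ultimately show ?thesis using True x by (simp add: phi_top ennreal_mult_top)
    next
      case False
      then obtain y where y: "g x = ennreal y" "y \<ge> 0" by (metis ennreal_cases)
      have gl: "g x / ennreal l = ennreal (y / l)" using y l1 by (simp add: divide_ennreal)
      have "(y / l) powr e x = y powr e x / l powr e x" using l1 y by (simp add: powr_divide)
      also have "\<dots> \<le> y powr e x / l powr c"
        using l1 x c lcpos by (intro divide_left_mono powr_mono) auto
      also have "\<dots> = (1 / l powr c) * y powr e x" by simp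
      finally have "ennreal ((y / l) powr e x) \<le> ennreal ((1 / l powr c) * y powr e x)"
        by (rule ennreal_leI)
      also have "\<dots> = ennreal (1 / l powr c) * ennreal (y powr e x)"
        by (rule ennreal_mult) auto
      finally show ?thesis using x y gl phi_real[of "y/l" "e x"] phi_real[of y "e x"] l1 by simp
    qed
  qed
  have "modular r (\<lambda>x. g x / ennreal l) \<le> (\<integral>\<^sup>+ x. ennreal (1 / l powr c) * phi_exp (r x) (g x) \<partial>lebesgue)"
    unfolding modular_def by (rule nn_integral_mono_AE[OF pw])
  also have "\<dots> \<le> ennreal (1 / l powr c) * ennreal I0"
    using nn_integral_cmult_le[of "1 / l powr c" lebesgue "\<lambda>x. phi_exp (r x) (g x)"] I0(1) by simp
  also have "\<dots> = ennreal (I0 / l powr c)" using I0(2) by (simp add: ennreal_mult[symmetric])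
  also have "\<dots> \<le> 1" using lc lcpos by (simp add: ennreal_le_1 field_simps)
  finally have "modular r (\<lambda>x. g x / ennreal l) \<le> 1" .
  then have "var_norm r g \<le> ennreal l"
    unfolding var_norm_def by (intro Inf_lower) (use l1 in auto)
  then show ?thesis using le_less_trans by fastforce
qed

lemma conj_exp_nonneg: "conj_exp y \<ge> 0"
  by (simp add: conj_exp_def)

lemma le1_iff:
  fixes q s \<beta> :: real
  assumes "q > 0" "s > 0" "\<beta> \<ge> 0"
  shows "(s + \<beta>) * (1 / (1 / q + \<beta>)) \<le> 1 \<longleftrightarrow> s * q \<le> 1"
proof -
  have d: "1 / q + \<beta> > 0" using assms by (intro add_pos_nonneg) auto
  have "(s + \<beta>) * (1 / (1 / q + \<beta>)) \<le> 1 \<longleftrightarrow> s + \<beta> \<le> 1 / q + \<beta>"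
    using d by (simp add: divide_le_eq)
  also have "\<dots> \<longleftrightarrow> s * q \<le> 1" using assms by (simp add: le_divide_eq mult.commute)
  finally show ?thesis .
qed

lemma ge1_iff:
  fixes q s \<beta> :: real
  assumes "q > 0" "s > 0" "\<beta> \<ge> 0"
  shows "1 \<le> (s + \<beta>) * (1 / (1 / q + \<beta>)) \<longleftrightarrow> 1 \<le> s * q"
proof -
  have d: "1 / q + \<beta> > 0" using assms by (intro add_pos_nonneg) auto
  have "1 \<le> (s + \<beta>) * (1 / (1 / q + \<beta>)) \<longleftrightarrow> 1 / q + \<beta> \<le> s + \<beta>"
    using d by (simp add: le_divide_eq)
  also have "\<dots> \<longleftrightarrow> 1 \<le> s * q" using assms by (simp add: divide_le_eq mult.commute)
  finally show ?thesis .
qed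

lemma dd: "(D::real) \<noteq> 0 \<Longrightarrow> (A / D) / (B / D) = A / B"
  by (cases "B = 0") (simp_all add: field_simps)

lemma conj_id:
  fixes q s \<beta> :: real
  assumes q: "q > 0" and s: "s > 0" and b: "\<beta> \<ge> 0"
  shows "conj_exp ((s + \<beta>) * (1 / (1 / q + \<beta>))) = conj_exp (s * q) * ereal ((s + \<beta>) / s)"
proof (cases "s * q \<le> 1")
  case True
  then have "(s + \<beta>) * (1 / (1 / q + \<beta>)) \<le> 1" using le1_iff[OF assms] by simp
  then show ?thesis using True s b by (simp add: conj_exp_def)
next
  case False
  then have F2: "\<not> (s + \<beta>) * (1 / (1 / q + \<beta>)) \<le> 1" using le1_iff[OF assms] by simp
  have d: "1 + \<beta> * q > 0" using q b by (simp add: add_pos_nonneg)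
  have sq: "s * q - 1 > 0" using False by simp
  have e1: "(s + \<beta>) * (1 / (1 / q + \<beta>)) = (s + \<beta>) * q / (1 + \<beta> * q)"
    using q d by (simp add: field_simps)
  have e2: "(s + \<beta>) * q / (1 + \<beta> * q) - 1 = (s * q - 1) / (1 + \<beta> * q)"
    using d by (simp add: field_simps)
  have "((s + \<beta>) * (1 / (1 / q + \<beta>))) / ((s + \<beta>) * (1 / (1 / q + \<beta>)) - 1)
      = (s + \<beta>) * q / (s * q - 1)"
    unfolding e1 e2 using dd[of "1 + \<beta> * q" "(s + \<beta>) * q" "s * q - 1"] d by simp
  also have "\<dots> = s * q / (s * q - 1) * ((s + \<beta>) / s)"
    using s sq by (simp add: field_simps)
  finally show ?thesis using False F2 by (simp add: conj_exp_def)
qed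

lemma conj_id2:
  fixes q s \<beta> \<kappa> :: real
  assumes q: "q > 0" and s: "s > 0" and b: "\<beta> \<ge> 0" and k: "\<kappa> > 0"
  shows "conj_exp ((s + \<beta>) * (1 / (1 / q + \<beta>))) / ereal (\<kappa> * (s + \<beta>) / s) = conj_exp (s * q) / ereal \<kappa>"
proof -
  have a: "(s + \<beta>) / s > 0" using s b by simp
  have k2: "\<kappa> * (s + \<beta>) / s > 0" using s b k by simp
  show ?thesis
  proof (cases "s * q \<le> 1")
    case True
    have sb: "s + \<beta> > 0" using s b by simp
    then show ?thesis unfolding conj_id[OF assms(1-3)] using a k k2 True s
      by (simp add: conj_exp_def divide_ereal_def)
  next
    case False
    have sb: "s + \<beta> > 0" using s b by simp
    define Z where "Z = s * q / (s * q - 1)"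
    have cz: "conj_exp (s * q) = ereal Z" using False by (simp add: conj_exp_def Z_def)
    have kk: "\<kappa> * (s + \<beta>) / s = \<kappa> * ((s + \<beta>) / s)" by simp
    have r: "Z * ((s + \<beta>) / s) / (\<kappa> * (s + \<beta>) / s) = Z / \<kappa>"
      unfolding kk by (rule mult_divide_mult_cancel_right) (use sb s in simp)
    have "conj_exp (s * q) * ereal ((s + \<beta>) / s) / ereal (\<kappa> * (s + \<beta>) / s)
        = ereal (Z * ((s + \<beta>) / s) / (\<kappa> * (s + \<beta>) / s))"
      unfolding cz using k2 k by simp
    also have "\<dots> = conj_exp (s * q) / ereal \<kappa>" unfolding r cz using k by simp
    finally show ?thesis unfolding conj_id[OF assms(1-3)] .
  qed
qed

lemma recip_mono:
  fixes d x \<beta> :: real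
  assumes "0 < d" "d \<le> x" "\<beta> \<ge> 0"
  shows "1 / (1 / d + \<beta>) \<le> 1 / (1 / x + \<beta>)"
proof -
  have "1 / x \<le> 1 / d" using assms by (simp add: frac_le)
  moreover have "0 < 1 / x + \<beta>" using assms by (intro add_pos_nonneg) auto
  ultimately show ?thesis using assms by (intro divide_left_mono) (auto intro: add_pos_nonneg mult_pos_pos)
qed

lemma recip_strict:
  fixes d x \<beta> :: real
  assumes "0 < d" "d < x" "\<beta> \<ge> 0"
  shows "1 / (1 / d + \<beta>) < 1 / (1 / x + \<beta>)"
proof -
  have "1 / x < 1 / d" using assms by (simp add: frac_less2)
  moreover have "0 < 1 / x + \<beta>" using assms by (intro add_pos_nonneg) auto
  ultimately show ?thesis using assms by (intro divide_strict_left_mono) (auto intro: add_pos_nonneg mult_pos_pos)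
qed

lemma hm:
  fixes a b :: real
  assumes "0 < a" "a < b"
  shows "a * (b / (b - a)) = 1 / (1 / a - 1 / b)"
  using assms by (simp add: field_simps)

lemma conj_eq:
  fixes x ps :: real
  assumes "0 < ps" "ps < x"
  shows "conj_exp (x / ps) = ereal (x / (x - ps))"
proof -
  have "\<not> x / ps \<le> 1" using assms by (simp add: not_le)
  moreover have "(x / ps) / (x / ps - 1) = x / (x - ps)" using assms by (simp add: field_simps)
  ultimately show ?thesis by (simp add: conj_exp_def)
qed

lemma conj_bound:
  fixes x d ps :: real
  assumes "0 < ps" "ps < d" "d \<le> x"
  shows "x / (x - ps) \<le> d / (d - ps)"
proof -
  have "d * ps \<le> x * ps" using assms by (intro mult_right_mono) auto
  then have "x * (d - ps) \<le> d * (x - ps)" by (simp add: algebra_simps)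
  moreover have "x - ps > 0" "d - ps > 0" using assms by auto
  ultimately show ?thesis by (simp add: divide_le_eq le_divide_eq mult.commute)
qed

lemma phi_zero: "phi_exp (ereal e) 0 = 0"
  using phi_real[of 0 e] by simp

theorem proposition3p1:
  fixes q w :: "'a::euclidean_space \<Rightarrow> real" and \<alpha> :: real
  assumes "0 < \<alpha>" and "\<alpha> < real DIM('a)"
    and "q \<in> borel_measurable lebesgue" and "\<forall>x. 0 < q x"
    and "0 < ess_inf q" and "ess_sup q < \<infinity>"
    and "w \<in> W_class q"
  shows "w \<in> W_class (\<lambda>x. 1 / (1 / q x + \<alpha> / real DIM('a)))
    \<and> s_index w (\<lambda>x. 1 / (1 / q x + \<alpha> / real DIM('a)))
        \<le> s_index w q + ereal (\<alpha> / real DIM('a))"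
proof -
  define \<beta> where "\<beta> = \<alpha> / real DIM('a)"
  have b0: "\<beta> > 0" using assms(1) by (simp add: \<beta>_def)
  define p where "p = (\<lambda>x. 1 / (1 / q x + \<beta>))"
  have pq: "(\<lambda>x. 1 / (1 / q x + \<alpha> / real DIM('a))) = p" by (simp add: p_def \<beta>_def)
  have q0: "\<And>x. q x > 0" using assms(4) by simp
  have ppos: "\<And>x. p x > 0" using q0 b0 by (simp add: p_def add_pos_pos)
  have ple: "\<And>x. p x \<le> q x"
  proof -
    fix x
    have "1 / (1 / q x + \<beta>) \<le> 1 / (1 / q x)"
      by (rule divide_left_mono) (use q0[of x] b0 in \<open>auto intro!: mult_pos_pos add_pos_pos divide_pos_pos\<close>)
    then show "p x \<le> q x" unfolding p_def by simp
  qed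
  have pmeas: "p \<in> borel_measurable lebesgue" unfolding p_def using assms(3) by auto
  obtain wW: "is_weight w"
    and psq: "\<exists>ps::real. 0 < ps \<and> ereal ps < min 1 (ess_inf q) \<and>
        (\<forall>Q. is_cube Q \<longrightarrow>
           wvar_norm (\<lambda>x. ereal (q x / ps)) (\<lambda>x. w x powr ps) (indicator Q) < \<infinity> \<and>
           wvar_norm (\<lambda>x. conj_exp (q x / ps)) (\<lambda>x. w x powr (- ps)) (indicator Q) < \<infinity>)"
    and kq: "\<exists>\<kappa>::real. \<kappa> > 1 \<and> (\<exists>s::real. s > 1 \<and> (AE x in lebesgue. 1 \<le> s * q x) \<and>
        M_bounded (\<lambda>x. conj_exp (s * q x) / ereal \<kappa>) (\<lambda>x. w x powr (- \<kappa> / s)))"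
    using assms(7) unfolding W_class_def mem_Collect_eq by (elim conjE) (intro that)
  obtain d0 where d0: "d0 > 0" "AE x in lebesgue. d0 \<le> q x"
    using ess_inf_gt[of 0 q] assms(5) by (auto simp: zero_ereal_def)
  obtain Kq where Kq: "AE x in lebesgue. q x \<le> Kq" using ess_sup_lt[OF assms(6)] by blast
  have wpos: "AE x in lebesgue. 0 < w x" using wW unfolding is_weight_def by blast
  have wmeas: "w \<in> borel_measurable lebesgue" using wW unfolding is_weight_def by blast

  define e0 where "e0 = 1 / (1 / d0 + \<beta>)"
  have e0pos: "e0 > 0" using d0 b0 by (simp add: e0_def add_pos_pos)
  have e0p: "AE x in lebesgue. e0 \<le> p x"
    using d0(2) by (rule eventually_mono) (use d0(1) b0 in \<open>auto simp: e0_def p_def intro!: recip_mono\<close>)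
  have pb: "p x \<le> 1 / \<beta>" for x
    unfolding p_def by (rule divide_left_mono) (use q0[of x] b0 in \<open>auto intro!: mult_pos_pos add_pos_pos\<close>)
  have adm: "admissible_exp p"
    unfolding admissible_exp_def
  proof (intro conjI allI)
    show "p \<in> borel_measurable lebesgue" by (rule pmeas)
    show "0 < p x" for x by (rule ppos)
    have "ereal e0 \<le> ess_inf p" by (rule ess_inf_ge[OF e0p])
    then show "0 < ess_inf p" using e0pos by (metis ereal_less(2) order_less_le_trans)
    have "ess_sup p \<le> ereal (1 / \<beta>)" by (rule ess_sup_le) (use pb in auto)
    moreover have "ereal (1 / \<beta>) < \<infinity>" by simp
    ultimately show "ess_sup p < \<infinity>" by (rule le_less_trans)
  qed
  have partI: "\<exists>ps::real. 0 < ps \<and> ereal ps < min 1 (ess_inf p) \<and>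
        (\<forall>Q. is_cube Q \<longrightarrow>
           wvar_norm (\<lambda>x. ereal (p x / ps)) (\<lambda>x. w x powr ps) (indicator Q) < \<infinity> \<and>
           wvar_norm (\<lambda>x. conj_exp (p x / ps)) (\<lambda>x. w x powr (- ps)) (indicator Q) < \<infinity>)"
  proof -
    obtain ps where ps0: "0 < ps" and psl: "ereal ps < min 1 (ess_inf q)"
      and cub: "\<forall>Q. is_cube Q \<longrightarrow>
           wvar_norm (\<lambda>x. ereal (q x / ps)) (\<lambda>x. w x powr ps) (indicator Q) < \<infinity> \<and>
           wvar_norm (\<lambda>x. conj_exp (q x / ps)) (\<lambda>x. w x powr (- ps)) (indicator Q) < \<infinity>"
      using psq by blast
    have ps1: "ps < 1" and psi: "ereal ps < ess_inf q" using psl by auto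
    obtain d where d: "d > ps" "AE x in lebesgue. d \<le> q x" using ess_inf_gt[OF psi] by blast
    have dpos: "d > 0" using d ps0 by simp
    define ps' where "ps' = 1 / (1 / ps + \<beta>)"
    have ps'0: "ps' > 0" using ps0 b0 by (simp add: ps'_def add_pos_pos)
    have "ps' < 1 / (1 / ps)" unfolding ps'_def
      by (rule divide_strict_left_mono) (use ps0 b0 in \<open>auto intro!: mult_pos_pos add_pos_pos divide_pos_pos\<close>)
    then have ps'_lt: "ps' < ps" by simp
    define dp where "dp = 1 / (1 / d + \<beta>)"
    have ps'dp: "ps' < dp" unfolding ps'_def dp_def using ps0 d(1) b0 by (intro recip_strict) auto
    have dpp: "AE x in lebesgue. dp \<le> p x"
      using d(2) by (rule eventually_mono) (use dpos b0 in \<open>auto simp: dp_def p_def intro!: recip_mono\<close>)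
    have inv1: "1 / ps' = 1 / ps + \<beta>" by (simp add: ps'_def)
    have inv2: "1 / p x = 1 / q x + \<beta>" for x by (simp add: p_def)
    have "ereal ps' < ereal dp" using ps'dp by simp
    also have "ereal dp \<le> ess_inf p" by (rule ess_inf_ge[OF dpp])
    finally have "ereal ps' < ess_inf p" .
    moreover have "ereal ps' < 1" using ps'_lt ps1 by simp
    ultimately have ps'l: "ereal ps' < min 1 (ess_inf p)" by simp
    have cubes: "wvar_norm (\<lambda>x. ereal (p x / ps')) (\<lambda>x. w x powr ps') (indicator Q) < \<infinity> \<and>
           wvar_norm (\<lambda>x. conj_exp (p x / ps')) (\<lambda>x. w x powr (- ps')) (indicator Q) < \<infinity>"
      if Q: "is_cube Q" for Q
    proof
      have Qs: "Q \<in> sets lebesgue" using cube_meas[OF Q] by simp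
      obtain \<mu> where mu: "\<mu> > 0" "emeasure lebesgue Q = ennreal \<mu>" using cube_meas[OF Q] by blast
      have A: "var_norm (\<lambda>x. ereal (q x / ps)) (\<lambda>x. indicator Q x * ennreal (w x powr ps)) < \<infinity>"
        using cub Q unfolding wvar_norm_def by blast
      have B: "var_norm (\<lambda>x. conj_exp (q x / ps)) (\<lambda>x. indicator Q x * ennreal (w x powr - ps)) < \<infinity>"
        using cub Q unfolding wvar_norm_def by blast
      have IA: "(\<integral>\<^sup>+ x. phi_exp (ereal (q x / ps)) (indicator Q x * ennreal (w x powr ps)) \<partial>lebesgue) < \<infinity>"
      proof (rule norm_fin_imp_int_fin[where e = "\<lambda>x. q x / ps" and K = "Kq / ps", OF _ A])
        show "AE x in lebesgue. ereal (q x / ps) = ereal (q x / ps) \<and> 0 \<le> q x / ps \<and> q x / ps \<le> Kq / ps"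
          using Kq by (rule eventually_mono) (use ps0 q0 in \<open>auto intro: divide_right_mono less_imp_le\<close>)
      qed
      define G where "G = (\<lambda>x. indicator Q x * ennreal (w x powr q x))"
      have Gm: "G \<in> borel_measurable lebesgue" unfolding G_def using Qs wmeas assms(3) by auto
      have eqA: "AE x in lebesgue. phi_exp (ereal (q x / ps)) (indicator Q x * ennreal (w x powr ps)) = G x"
        using wpos
      proof (rule eventually_mono)
        fix x assume wx: "0 < w x"
        show "phi_exp (ereal (q x / ps)) (indicator Q x * ennreal (w x powr ps)) = G x"
        proof (cases "x \<in> Q")
          case True
          have "phi_exp (ereal (q x / ps)) (ennreal (w x powr ps)) = ennreal ((w x powr ps) powr (q x / ps))"
            by (rule phi_real) simp
          also have "\<dots> = ennreal (w x powr q x)" using ps0 by (simp add: powr_powr)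
          finally show ?thesis using True by (simp add: G_def)
        next
          case False then show ?thesis by (simp add: G_def phi_zero)
        qed
      qed
      have leA: "AE x in lebesgue. phi_exp (ereal (p x / ps')) (indicator Q x * ennreal (w x powr ps'))
                   \<le> indicator Q x + G x"
        using wpos
      proof (rule eventually_mono)
        fix x assume wx: "0 < w x"
        show "phi_exp (ereal (p x / ps')) (indicator Q x * ennreal (w x powr ps')) \<le> indicator Q x + G x"
        proof (cases "x \<in> Q")
          case True
          have "phi_exp (ereal (p x / ps')) (ennreal (w x powr ps')) = ennreal ((w x powr ps') powr (p x / ps'))"
            by (rule phi_real) simp
          also have "\<dots> = ennreal (w x powr p x)" using ps'0 by (simp add: powr_powr)
          also have "\<dots> \<le> ennreal (1 + w x powr q x)"
          proof (rule ennreal_leI)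
            show "w x powr p x \<le> 1 + w x powr q x"
            proof (cases "w x \<le> 1")
              case True
              then have "w x powr p x \<le> 1" using wx ppos[of x] by (intro powr_le1) auto
              then show ?thesis using powr_ge_zero[of "w x" "q x"] by linarith
            next
              case False
              then have "w x powr p x \<le> w x powr q x" using ple[of x] by (intro powr_mono) auto
              then show ?thesis by linarith
            qed
          qed
          also have "\<dots> = 1 + ennreal (w x powr q x)" by (subst ennreal_plus) auto
          finally show ?thesis using True by (simp add: G_def)
        next
          case False then show ?thesis by (simp add: G_def phi_zero)
        qed
      qed
      have "(\<integral>\<^sup>+ x. phi_exp (ereal (p x / ps')) (indicator Q x * ennreal (w x powr ps')) \<partial>lebesgue)
          \<le> (\<integral>\<^sup>+ x. indicator Q x + G x \<partial>lebesgue)"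
        by (rule nn_integral_mono_AE[OF leA])
      also have "\<dots> = emeasure lebesgue Q + (\<integral>\<^sup>+ x. G x \<partial>lebesgue)"
        using Qs Gm by (subst nn_integral_add) auto
      also have "(\<integral>\<^sup>+ x. G x \<partial>lebesgue)
          = (\<integral>\<^sup>+ x. phi_exp (ereal (q x / ps)) (indicator Q x * ennreal (w x powr ps)) \<partial>lebesgue)"
        by (rule nn_integral_cong_AE) (use eqA in \<open>auto elim: eventually_mono\<close>)
      also have "emeasure lebesgue Q + \<dots> < \<infinity>" using mu IA by (simp add: less_top[symmetric])
      finally have IA': "(\<integral>\<^sup>+ x. phi_exp (ereal (p x / ps')) (indicator Q x * ennreal (w x powr ps')) \<partial>lebesgue) < \<infinity>" .
      have "var_norm (\<lambda>x. ereal (p x / ps')) (\<lambda>x. indicator Q x * ennreal (w x powr ps')) < \<infinity>"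
      proof (rule int_fin_imp_norm_fin[where e = "\<lambda>x. p x / ps'" and c = 1, OF _ _ IA'])
        show "AE x in lebesgue. ereal (p x / ps') = ereal (p x / ps') \<and> 1 \<le> p x / ps'"
          using dpp by (rule eventually_mono) (use ps'dp ps'0 in \<open>auto simp: le_divide_eq\<close>)
      qed simp
      then show "wvar_norm (\<lambda>x. ereal (p x / ps')) (\<lambda>x. w x powr ps') (indicator Q) < \<infinity>"
        unfolding wvar_norm_def .
      have IB: "(\<integral>\<^sup>+ x. phi_exp (conj_exp (q x / ps)) (indicator Q x * ennreal (w x powr - ps)) \<partial>lebesgue) < \<infinity>"
      proof (rule norm_fin_imp_int_fin[where e = "\<lambda>x. q x / (q x - ps)" and K = "d / (d - ps)", OF _ B])
        show "AE x in lebesgue. conj_exp (q x / ps) = ereal (q x / (q x - ps)) \<and> 0 \<le> q x / (q x - ps)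
               \<and> q x / (q x - ps) \<le> d / (d - ps)"
          using d(2)
        proof (rule eventually_mono)
          fix x assume dx: "d \<le> q x"
          then have "ps < q x" using d(1) by simp
          then show "conj_exp (q x / ps) = ereal (q x / (q x - ps)) \<and> 0 \<le> q x / (q x - ps)
               \<and> q x / (q x - ps) \<le> d / (d - ps)"
            using conj_eq[OF ps0] conj_bound[OF ps0 d(1) dx] q0[of x] by auto
        qed
      qed
      have eqB: "AE x in lebesgue. phi_exp (conj_exp (p x / ps')) (indicator Q x * ennreal (w x powr - ps'))
          = phi_exp (conj_exp (q x / ps)) (indicator Q x * ennreal (w x powr - ps))"
        using wpos d(2) dpp
      proof eventually_elim
        fix x assume wx: "0 < w x" and dx: "d \<le> q x" and dpx: "dp \<le> p x"
        have pq1: "ps < q x" using d(1) dx by simp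
        have pp1: "ps' < p x" using ps'dp dpx by simp
        have c1: "conj_exp (p x / ps') = ereal (p x / (p x - ps'))" by (rule conj_eq[OF ps'0 pp1])
        have c2: "conj_exp (q x / ps) = ereal (q x / (q x - ps))" by (rule conj_eq[OF ps0 pq1])
        have ex: "ps' * (p x / (p x - ps')) = ps * (q x / (q x - ps))"
          unfolding hm[OF ps'0 pp1] hm[OF ps0 pq1] inv1 inv2 by simp
        show "phi_exp (conj_exp (p x / ps')) (indicator Q x * ennreal (w x powr - ps'))
          = phi_exp (conj_exp (q x / ps)) (indicator Q x * ennreal (w x powr - ps))"
        proof (cases "x \<in> Q")
          case True
          have "phi_exp (ereal (p x / (p x - ps'))) (ennreal (w x powr - ps'))
              = ennreal ((w x powr - ps') powr (p x / (p x - ps')))" by (rule phi_real) simp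
          also have "\<dots> = ennreal (w x powr (- (ps' * (p x / (p x - ps')))))" by (simp add: powr_powr)
          also have "\<dots> = ennreal (w x powr (- (ps * (q x / (q x - ps)))))" unfolding ex ..
          also have "\<dots> = ennreal ((w x powr - ps) powr (q x / (q x - ps)))" by (simp add: powr_powr)
          also have "\<dots> = phi_exp (ereal (q x / (q x - ps))) (ennreal (w x powr - ps))"
            by (rule phi_real[symmetric]) simp
          finally show ?thesis using True c1 c2 by simp
        next
          case False then show ?thesis using c1 c2 by (simp add: phi_zero)
        qed
      qed
      have IB': "(\<integral>\<^sup>+ x. phi_exp (conj_exp (p x / ps')) (indicator Q x * ennreal (w x powr - ps')) \<partial>lebesgue) < \<infinity>"
        using IB nn_integral_cong_AE[OF eqB] by simp
      have "var_norm (\<lambda>x. conj_exp (p x / ps')) (\<lambda>x. indicator Q x * ennreal (w x powr - ps')) < \<infinity>"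
      proof (rule int_fin_imp_norm_fin[where e = "\<lambda>x. p x / (p x - ps')" and c = 1, OF _ _ IB'])
        show "AE x in lebesgue. conj_exp (p x / ps') = ereal (p x / (p x - ps')) \<and> 1 \<le> p x / (p x - ps')"
          using dpp
        proof (rule eventually_mono)
          fix x assume "dp \<le> p x"
          then have pp1: "ps' < p x" using ps'dp by simp
          then show "conj_exp (p x / ps') = ereal (p x / (p x - ps')) \<and> 1 \<le> p x / (p x - ps')"
            using conj_eq[OF ps'0 pp1] ps'0 by (simp add: le_divide_eq)
        qed
      qed simp
      then show "wvar_norm (\<lambda>x. conj_exp (p x / ps')) (\<lambda>x. w x powr (- ps')) (indicator Q) < \<infinity>"
        unfolding wvar_norm_def .
    qed
    show ?thesis using ps'0 ps'l cubes by blast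
  qed
  have partII: "\<exists>\<kappa>::real. \<kappa> > 1 \<and> (\<exists>s::real. s > 1 \<and> (AE x in lebesgue. 1 \<le> s * p x) \<and>
        M_bounded (\<lambda>x. conj_exp (s * p x) / ereal \<kappa>) (\<lambda>x. w x powr (- \<kappa> / s)))"
  proof -
    obtain \<kappa> s where k: "\<kappa> > 1" and s: "s > 1" and aes: "AE x in lebesgue. 1 \<le> s * q x"
      and Mb: "M_bounded (\<lambda>x. conj_exp (s * q x) / ereal \<kappa>) (\<lambda>x. w x powr (- \<kappa> / s))"
      using kq by blast
    have s0: "s > 0" and k0: "\<kappa> > 0" and sb: "s + \<beta> > 0" using s k b0 by auto
    have kk: "\<kappa> * (s + \<beta>) / s = \<kappa> + \<kappa> * \<beta> / s" using s0 by (simp add: field_simps)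
    have "\<kappa> * \<beta> / s > 0" using k0 b0 s0 by simp
    then have k1: "\<kappa> * (s + \<beta>) / s > 1" unfolding kk using k by simp
    have ae2: "AE x in lebesgue. 1 \<le> (s + \<beta>) * p x"
      using aes by (rule eventually_mono) (use ge1_iff[OF q0 s0 less_imp_le[OF b0]] in \<open>simp add: p_def\<close>)
    have f1: "(\<lambda>x. conj_exp ((s + \<beta>) * p x) / ereal (\<kappa> * (s + \<beta>) / s)) = (\<lambda>x. conj_exp (s * q x) / ereal \<kappa>)"
      unfolding p_def using conj_id2[OF q0 s0 less_imp_le[OF b0] k0] by simp
    have f3: "\<kappa> * (s + \<beta>) / s / (s + \<beta>) = \<kappa> / s"
      unfolding divide_divide_eq_left by (rule nonzero_mult_divide_mult_cancel_right) (use sb in simp)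
    have f2: "- (\<kappa> * (s + \<beta>) / s) / (s + \<beta>) = - \<kappa> / s" using f3 by simp
    have "M_bounded (\<lambda>x. conj_exp ((s + \<beta>) * p x) / ereal (\<kappa> * (s + \<beta>) / s))
        (\<lambda>x. w x powr (- (\<kappa> * (s + \<beta>) / s) / (s + \<beta>)))"
      unfolding f1 f2 by (rule Mb)
    then show ?thesis using k1 ae2 s b0
      by (intro exI[of _ "\<kappa> * (s + \<beta>) / s"] conjI exI[of _ "s + \<beta>"]) auto
  qed
  have idx: "s_index w p \<le> s_index w q + ereal \<beta>"
    unfolding s_index_def
  proof -
    let ?Sp = "{ereal s | s. s \<ge> 1 \<and> (AE x in lebesgue. 1 \<le> s * p x) \<and>
      M_bounded (\<lambda>x. conj_exp (s * p x)) (\<lambda>x. w x powr (- 1 / s))}"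
    let ?Sq = "{ereal s | s. s \<ge> 1 \<and> (AE x in lebesgue. 1 \<le> s * q x) \<and>
      M_bounded (\<lambda>x. conj_exp (s * q x)) (\<lambda>x. w x powr (- 1 / s))}"
    have key: "Inf ?Sp \<le> ereal s + ereal \<beta>" if s1: "s \<ge> 1" and aes: "AE x in lebesgue. 1 \<le> s * q x"
      and Mb: "M_bounded (\<lambda>x. conj_exp (s * q x)) (\<lambda>x. w x powr (- 1 / s))" for s
    proof -
      have s0: "s > 0" and sb: "s + \<beta> > 0" using s1 b0 by auto
      have t1: "(s + \<beta>) / s \<ge> 1" using s0 b0 by (simp add: field_simps)
      have vv: "w x powr (- 1 / s) = (w x powr (- 1 / (s + \<beta>))) powr ((s + \<beta>) / s)" for x
      proof -
        have "- 1 / (s + \<beta>) * ((s + \<beta>) / s) = - 1 / s" using sb s0 by (simp add: field_simps)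
        then show ?thesis by (simp only: powr_powr)
      qed
      have M2: "M_bounded (\<lambda>x. conj_exp (s * q x) * ereal ((s + \<beta>) / s)) (\<lambda>x. w x powr (- 1 / (s + \<beta>)))"
        by (rule M_bounded_pow[OF t1 Mb]) (use vv conj_exp_nonneg in auto)
      have f1: "(\<lambda>x. conj_exp (s * q x) * ereal ((s + \<beta>) / s)) = (\<lambda>x. conj_exp ((s + \<beta>) * p x))"
        unfolding p_def using conj_id[OF q0 s0 less_imp_le[OF b0]] by simp
      have ae2: "AE x in lebesgue. 1 \<le> (s + \<beta>) * p x"
        using aes by (rule eventually_mono) (use ge1_iff[OF q0 s0 less_imp_le[OF b0]] in \<open>simp add: p_def\<close>)
      have "ereal (s + \<beta>) \<in> ?Sp" using M2 ae2 s1 b0 unfolding f1 by auto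
      then have "Inf ?Sp \<le> ereal (s + \<beta>)" by (rule Inf_lower)
      then show ?thesis by simp
    qed
    have "Inf ?Sp - ereal \<beta> \<le> Inf ?Sq"
    proof (rule Inf_greatest)
      fix z assume "z \<in> ?Sq"
      then obtain s where z: "z = ereal s" "s \<ge> 1" "AE x in lebesgue. 1 \<le> s * q x"
        "M_bounded (\<lambda>x. conj_exp (s * q x)) (\<lambda>x. w x powr (- 1 / s))" by blast
      have "Inf ?Sp \<le> z + ereal \<beta>" using key[OF z(2-4)] z(1) by simp
      then show "Inf ?Sp - ereal \<beta> \<le> z" by (simp add: ereal_minus_le)
    qed
    then show "Inf ?Sp \<le> Inf ?Sq + ereal \<beta>" by (simp add: ereal_minus_le)
  qed
  have "w \<in> W_class p" unfolding W_class_def using adm wW partI partII by blast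
  then show ?thesis unfolding pq using idx by (simp add: \<beta>_def)
qed


end
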